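(* Let $X$ be a real reflexive Banach space, $T:X\rightrightarrows X^{\ast}$ maximally monotone, and $h\in\mathcal{H}(T)$. Then $\breve{T}_h$ is additive. Moreover, $\breve{T}_h$ is maximally additive if and only if $(\mathcal{A}h)^{\ast}\circ i=\mathcal{A}h$. Consequently, if $h^{\ast}\circ i=h$ then $\breve{T}_h$ is maximally additive.
   Context: $X^{\ast}$ is the dual of $X$ with pairing $\langle\cdot,\cdot\rangle$. The dual of $X\times X^{\ast}$ is identified with $X^{\ast}\times X$ via $\langle (x,x^{\ast}),(y^{\ast},y)\rangle=\langle x,y^{\ast}\rangle+\langle y,x^{\ast}\rangle$; for $g:X\times X^{\ast}\to\mathbb{R}\cup\{+\infty\}$, $g^{\ast}(y^{\ast},y)=\sup_{(x,x^{\ast})}\{\langle x,y^{\ast}\rangle+\langle y,x^{\ast}\rangle-g(x,x^{\ast})\}$, and $i(x,x^{\ast})=(x^{\ast},x)$. $\mathcal{H}(T)$ is the family of lower semicontinuous convex $h:X\times X^{\ast}\to\mathbb{R}\cup\{+\infty\}$ with $h(x,x^{\ast})\ge\langle x,x^{\ast}\rangle$ everywhere and equality whenever $x^{\ast}\in T(x)$. $\mathcal{A}h:=\tfrac12(h+h^{\ast}\circ i)$. For $\eta\ge0$, $\partial_\eta h(z)$ is the set of $(y^{\ast},y)\in X^{\ast}\times X$ with $h(w,w^{\ast})\ge h(z)+\langle (w,w^{\ast})-z,(y^{\ast},y)\rangle-\eta$ for all $(w,w^{\ast})$ when $h(z)<\infty$, and $\emptyset$ otherwise; $\breve{T}_h(\epsilon,x):=\{x^{\ast}:(x^{\ast},x)\in\partial_{2\epsilon}h(x,x^{\ast})\}$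 for $\epsilon\ge0$. For $g\in\mathcal{H}(T)$, $L^{g}(\epsilon,x)=\{x^{\ast}:g(x,x^{\ast})\le\langle x,x^{\ast}\rangle+\epsilon\}$; the family $\mathbb{E}(T)$ of enlargements of $T$ consists exactly of the maps $L^g$, $g\in\mathcal{H}(T)$ (each with a unique $g$). An enlargement $E$ is additive if $\langle x-y,x^{\ast}-y^{\ast}\rangle\ge-(\epsilon_1+\epsilon_2)$ whenever $x^{\ast}\in E(\epsilon_1,x)$, $y^{\ast}\in E(\epsilon_2,y)$. An additive $E\in\mathbb{E}(T)$ is maximally additive if whenever $E'\in\mathbb{E}(T)$ is additive and $E(\epsilon,x)\subset E'(\epsilon,x)$ for all $\epsilon\ge0$, $x\in X$, then $E=E'$. *)

theory Defs
  imports "HOL-Analysis.Analysis"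
begin

text \<open>The dual X* of a real Banach space X is rendered as the type of bounded linear
functionals on X with values in real; the pairing of x and xs is xs applied to x.\<close>

definition pair :: "'a::real_normed_vector \<Rightarrow> ('a \<Rightarrow>\<^sub>L real) \<Rightarrow> real" where
  "pair x xs = blinfun_apply xs x"

definition reflexive_space :: "'a::real_normed_vector itself \<Rightarrow> bool" where
  "reflexive_space _ \<longleftrightarrow>
     (\<forall>\<phi> :: ('a \<Rightarrow>\<^sub>L real) \<Rightarrow>\<^sub>L real. \<exists>x::'a. \<forall>f. blinfun_apply \<phi> f = blinfun_apply f x)"

definition monotone_op :: "('a::real_normed_vector \<Rightarrow> ('a \<Rightarrow>\<^sub>L real) set) \<Rightarrow> bool" where
  "monotone_op T \<longleftrightarrow>
     (\<forall>x y xs ys. xs \<in> T x \<longrightarrow> ys \<in> T y \<longrightarrow> pair (x - y) (xs - ys) \<ge> 0)"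

definition maximal_monotone :: "('a::real_normed_vector \<Rightarrow> ('a \<Rightarrow>\<^sub>L real) set) \<Rightarrow> bool" where
  "maximal_monotone T \<longleftrightarrow> monotone_op T \<and>
     (\<forall>S. monotone_op S \<and> (\<forall>x. T x \<subseteq> S x) \<longrightarrow> S = T)"

definition ext_convex :: "('v::real_vector \<Rightarrow> ereal) \<Rightarrow> bool" where
  "ext_convex f \<longleftrightarrow> (\<forall>u v t. 0 \<le> t \<and> t \<le> 1 \<longrightarrow>
      f ((1 - t) *\<^sub>R u + t *\<^sub>R v) \<le> ereal (1 - t) * f u + ereal t * f v)"

definition ext_lsc :: "('v::topological_space \<Rightarrow> ereal) \<Rightarrow> bool" where
  "ext_lsc f \<longleftrightarrow> (\<forall>c. closed {z. f z \<le> c})"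

definition fitz_family :: "('a::real_normed_vector \<Rightarrow> ('a \<Rightarrow>\<^sub>L real) set)
    \<Rightarrow> ('a \<times> ('a \<Rightarrow>\<^sub>L real) \<Rightarrow> ereal) set" where
  "fitz_family T = {h. (\<forall>z. h z \<noteq> -\<infinity>) \<and> ext_convex h \<and> ext_lsc h \<and>
      (\<forall>x xs. h (x, xs) \<ge> ereal (pair x xs)) \<and>
      (\<forall>x xs. xs \<in> T x \<longrightarrow> h (x, xs) = ereal (pair x xs))}"

definition fenchel_conj :: "('a::real_normed_vector \<times> ('a \<Rightarrow>\<^sub>L real) \<Rightarrow> ereal)
    \<Rightarrow> ('a \<Rightarrow>\<^sub>L real) \<times> 'a \<Rightarrow> ereal" where
  "fenchel_conj g = (\<lambda>(ys, y). SUP z. ereal (pair (fst z) ys + pair y (snd z)) - g z)"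

definition iswap :: "'a \<times> 'b \<Rightarrow> 'b \<times> 'a" where
  "iswap z = (snd z, fst z)"

definition avg_op :: "('a::real_normed_vector \<times> ('a \<Rightarrow>\<^sub>L real) \<Rightarrow> ereal)
    \<Rightarrow> 'a \<times> ('a \<Rightarrow>\<^sub>L real) \<Rightarrow> ereal" where
  "avg_op h = (\<lambda>z. (h z + (fenchel_conj h \<circ> iswap) z) / 2)"

definition eps_subdiff :: "real \<Rightarrow> ('a::real_normed_vector \<times> ('a \<Rightarrow>\<^sub>L real) \<Rightarrow> ereal)
    \<Rightarrow> 'a \<times> ('a \<Rightarrow>\<^sub>L real) \<Rightarrow> (('a \<Rightarrow>\<^sub>L real) \<times> 'a) set" where
  "eps_subdiff \<eta> h z = (if h z < \<infinity> then
     {(ys, y). \<forall>w. h w \<ge> h z + ereal (pair (fst w - fst z) ys + pair y (snd w - snd z)) - ereal \<eta>}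
     else {})"

definition breve :: "('a::real_normed_vector \<times> ('a \<Rightarrow>\<^sub>L real) \<Rightarrow> ereal)
    \<Rightarrow> real \<Rightarrow> 'a \<Rightarrow> ('a \<Rightarrow>\<^sub>L real) set" where
  "breve h \<epsilon> x = {xs. (xs, x) \<in> eps_subdiff (2 * \<epsilon>) h (x, xs)}"

definition Lenl :: "('a::real_normed_vector \<times> ('a \<Rightarrow>\<^sub>L real) \<Rightarrow> ereal)
    \<Rightarrow> real \<Rightarrow> 'a \<Rightarrow> ('a \<Rightarrow>\<^sub>L real) set" where
  "Lenl g \<epsilon> x = {xs. g (x, xs) \<le> ereal (pair x xs + \<epsilon>)}"

definition is_enlargement :: "('a::real_normed_vector \<Rightarrow> ('a \<Rightarrow>\<^sub>L real) set)
    \<Rightarrow> (real \<Rightarrow> 'a \<Rightarrow> ('a \<Rightarrow>\<^sub>L real) set) \<Rightarrow> bool" where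
  "is_enlargement T E \<longleftrightarrow> (\<exists>g \<in> fitz_family T. \<forall>\<epsilon> \<ge> 0. \<forall>x. E \<epsilon> x = Lenl g \<epsilon> x)"

definition additive_enl :: "(real \<Rightarrow> 'a::real_normed_vector \<Rightarrow> ('a \<Rightarrow>\<^sub>L real) set) \<Rightarrow> bool" where
  "additive_enl E \<longleftrightarrow> (\<forall>e1 e2 x y xs ys. e1 \<ge> 0 \<longrightarrow> e2 \<ge> 0 \<longrightarrow>
      xs \<in> E e1 x \<longrightarrow> ys \<in> E e2 y \<longrightarrow> pair (x - y) (xs - ys) \<ge> - (e1 + e2))"

definition max_additive :: "('a::real_normed_vector \<Rightarrow> ('a \<Rightarrow>\<^sub>L real) set)
    \<Rightarrow> (real \<Rightarrow> 'a \<Rightarrow> ('a \<Rightarrow>\<^sub>L real) set) \<Rightarrow> bool" where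
  "max_additive T E \<longleftrightarrow> is_enlargement T E \<and> additive_enl E \<and>
     (\<forall>E'. is_enlargement T E' \<and> additive_enl E' \<and> (\<forall>\<epsilon> \<ge> 0. \<forall>x. E \<epsilon> x \<subseteq> E' \<epsilon> x)
        \<longrightarrow> (\<forall>\<epsilon> \<ge> 0. \<forall>x. E \<epsilon> x = E' \<epsilon> x))"

end

theory Submission
  imports Defs
begin

definition bil :: "'a::real_normed_vector \<times> ('a \<Rightarrow>\<^sub>L real) \<Rightarrow> 'a \<times> ('a \<Rightarrow>\<^sub>L real) \<Rightarrow> real" where
  "bil w z = pair (fst w) (snd z) + pair (fst z) (snd w)"

definition pp :: "'a::real_normed_vector \<times> ('a \<Rightarrow>\<^sub>L real) \<Rightarrow> real" where
  "pp z = pair (fst z) (snd z)"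

definition conjT :: "('a::real_normed_vector \<times> ('a \<Rightarrow>\<^sub>L real) \<Rightarrow> ereal) \<Rightarrow> 'a \<times> ('a \<Rightarrow>\<^sub>L real) \<Rightarrow> ereal" where
  "conjT f = fenchel_conj f \<circ> iswap"

lemma conjT_eq: "conjT f z = (SUP w. ereal (bil w z) - f w)"
  by (cases z) (simp add: conjT_def fenchel_conj_def iswap_def bil_def)

lemma avg_eq: "avg_op h z = (h z + conjT h z) / 2"
  by (simp add: avg_op_def conjT_def)

lemma FY: "ereal (bil w z) - f w \<le> conjT f z"
  unfolding conjT_eq by (rule SUP_upper) simp

lemma conjT_leI: "(\<And>w. ereal (bil w z) - f w \<le> c) \<Longrightarrow> conjT f z \<le> c"
  unfolding conjT_eq by (rule SUP_least) simp

lemmas pair_simps = pair_def blinfun.bilinear_simps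

lemma bil_sym: "bil w z = bil z w"
  by (simp add: bil_def)

lemma bil_self: "bil z z = 2 * pp z"
  by (simp add: bil_def pp_def)

lemma pp_diff: "pp (z1 - z2) = pp z1 + pp z2 - bil z1 z2"
  by (simp add: pp_def bil_def pair_simps)

lemma pp_pair_diff: "pair (x - y) (xs - ys) = pp (x,xs) + pp (y,ys) - bil (x,xs) (y,ys)"
  by (simp add: pp_def bil_def pair_simps)

lemma bil_comb: "bil w ((1-t) *\<^sub>R u + t *\<^sub>R v) = (1-t) * bil w u + t * bil w v"
  by (simp add: bil_def pair_simps algebra_simps)

lemma pp_comb: "pp ((1-t) *\<^sub>R u + t *\<^sub>R v) = (1-t)^2 * pp u + t^2 * pp v + t*(1-t) * bil u v"
  by (simp add: pp_def bil_def pair_simps algebra_simps power2_eq_square)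

lemma conjT_mono: "(\<And>z. f z \<le> g z) \<Longrightarrow> conjT g z \<le> conjT f z"
  unfolding conjT_eq by (intro SUP_mono) (metis ereal_minus_mono order_refl)

lemma ereal_swap: "ereal b - F \<le> C \<Longrightarrow> ereal b - C \<le> F"
  by (cases F; cases C) auto

lemma biconj_le: "conjT (conjT f) z \<le> f z"
proof (rule conjT_leI)
  fix w
  have "ereal (bil z w) - f z \<le> conjT f w" by (rule FY)
  then show "ereal (bil w z) - conjT f w \<le> f z" by (simp add: bil_sym ereal_swap)
qed


lemma convex_realD:
  assumes "ext_convex f" "0 \<le> t" "t \<le> 1" "f u \<le> ereal a" "f v \<le> ereal b"
  shows "f ((1-t) *\<^sub>R u + t *\<^sub>R v) \<le> ereal ((1-t)*a + t*b)"
proof -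
  have "f ((1-t) *\<^sub>R u + t *\<^sub>R v) \<le> ereal (1 - t) * f u + ereal t * f v"
    using assms(1-3) unfolding ext_convex_def by blast
  also have "\<dots> \<le> ereal (1 - t) * ereal a + ereal t * ereal b"
    using assms by (intro add_mono ereal_mult_left_mono) auto
  finally show ?thesis by simp
qed

lemma convex_realI:
  assumes ninf: "\<And>z. f z \<noteq> -\<infinity>"
    and H: "\<And>u v t a b. 0 \<le> t \<Longrightarrow> t \<le> 1 \<Longrightarrow> f u \<le> ereal a \<Longrightarrow> f v \<le> ereal b \<Longrightarrow>
       f ((1-t) *\<^sub>R u + t *\<^sub>R v) \<le> ereal ((1-t)*a + t*b)"
  shows "ext_convex f"
  unfolding ext_convex_def
proof (intro allI impI)
  fix u v :: 'a and t :: real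
  assume t: "0 \<le> t \<and> t \<le> 1"
  show "f ((1 - t) *\<^sub>R u + t *\<^sub>R v) \<le> ereal (1 - t) * f u + ereal t * f v"
  proof (cases "t = 0")
    case True then show ?thesis by (simp add: zero_ereal_def[symmetric])
  next
    case t0: False
    show ?thesis
    proof (cases "t = 1")
      case True then show ?thesis by (simp add: zero_ereal_def[symmetric])
    next
      case t1: False
      have tt: "0 < t" "0 < 1 - t" using t t0 t1 by auto
      show ?thesis
      proof (cases "f u = \<infinity> \<or> f v = \<infinity>")
        case True
        then show ?thesis using tt ninf[of u] ninf[of v]
          by (cases "f u"; cases "f v") (auto simp: ereal_mult_infty)
      next
        case False
        then obtain a b where ab: "f u = ereal a" "f v = ereal b"
          using ninf[of u] ninf[of v] by (cases "f u"; cases "f v") auto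
        show ?thesis using H[of t u a v b] t ab by simp
      qed
    qed
  qed
qed

lemma lsc_realI:
  assumes "\<And>r. closed {z. f z \<le> ereal r}"
  shows "ext_lsc f"
  unfolding ext_lsc_def
proof
  fix c :: ereal
  show "closed {z. f z \<le> c}"
  proof (cases c)
    case (real r) then show ?thesis using assms by simp
  next
    case PInf then show ?thesis by simp
  next
    case MInf
    have "{z. f z \<le> c} = (\<Inter>r. {z. f z \<le> ereal r})"
    proof (auto simp: MInf)
      fix z assume "\<forall>r. f z \<le> ereal r"
      then show "f z = -\<infinity>"
        by (cases "f z") (auto dest: spec[of _ "real_of_ereal (f z) - 1"] spec[of _ 0])
    qed
    then show ?thesis using assms by auto
  qed
qed

lemma lsc_open:
  assumes "ext_lsc f" shows "open {z. c < f z}"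
proof -
  have "closed {z. f z \<le> c}" using assms by (simp add: ext_lsc_def)
  then have "open (- {z. f z \<le> c})" by (simp add: open_Compl)
  moreover have "- {z. f z \<le> c} = {z. c < f z}" by auto
  ultimately show ?thesis by simp
qed

lemma small_t:
  fixes A K H :: real
  assumes "\<And>t. 0 < t \<Longrightarrow> t \<le> 1 \<Longrightarrow> A + t * K \<le> H"
  shows "A \<le> H"
proof (rule ccontr)
  assume "\<not> A \<le> H"
  then have d: "A - H > 0" by simp
  define t where "t = min 1 ((A - H) / (2 * (\<bar>K\<bar> + 1)))"
  have t0: "0 < t" "t \<le> 1" using d by (auto simp: t_def)
  have "t * \<bar>K\<bar> \<le> (A - H) / (2 * (\<bar>K\<bar> + 1)) * \<bar>K\<bar>"
    by (intro mult_right_mono) (auto simp: t_def)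
  also have "\<dots> < A - H"
  proof -
    have "(A - H) / (2 * (\<bar>K\<bar> + 1)) * \<bar>K\<bar> = (A - H) * (\<bar>K\<bar> / (2 * (\<bar>K\<bar> + 1)))" by simp
    also have "\<dots> < (A - H) * 1"
      using d by (intro mult_strict_left_mono) (auto simp: field_simps)
    finally show ?thesis by simp
  qed
  finally have "t * \<bar>K\<bar> < A - H" .
  moreover have "- (t * \<bar>K\<bar>) \<le> t * K"
  proof -
    have "- \<bar>K\<bar> \<le> K" by simp
    then have "t * (- \<bar>K\<bar>) \<le> t * K" using t0 by (intro mult_left_mono) auto
    then show ?thesis by simp
  qed
  ultimately have "A + t * K > H" by linarith
  with assms[OF t0] show False by simp
qed

lemma fitzD:
  assumes "h \<in> fitz_family T"
  shows "\<And>z. h z \<noteq> -\<infinity>" "ext_convex h" "ext_lsc h" "\<And>z. ereal (pp z) \<le> h z"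
    "\<And>x xs. xs \<in> T x \<Longrightarrow> h (x, xs) = ereal (pp (x, xs))"
  using assms unfolding fitz_family_def pp_def by auto

lemma phi_le:
  assumes hH: "h \<in> fitz_family T" and xT: "xs \<in> T x"
  shows "ereal (bil (x,xs) w - pp (x,xs)) \<le> h w"
proof (cases "h w")
  case PInf then show ?thesis by simp
next
  case MInf then show ?thesis using fitzD(1)[OF hH] by simp
next
  case (real H)
  define z0 where "z0 = (x, xs)"
  have hz0: "h z0 = ereal (pp z0)" using fitzD(5)[OF hH xT] by (simp add: z0_def)
  have "bil z0 w - pp z0 + t * (pp z0 + pp w - bil z0 w) \<le> H" if t: "0 < t" "t \<le> 1" for t
  proof -
    have "ereal (pp ((1-t) *\<^sub>R z0 + t *\<^sub>R w)) \<le> h ((1-t) *\<^sub>R z0 + t *\<^sub>R w)"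
      by (rule fitzD(4)[OF hH])
    also have "\<dots> \<le> ereal ((1-t) * pp z0 + t * H)"
      using t hz0 real by (intro convex_realD[OF fitzD(2)[OF hH]]) auto
    finally have "(1-t)^2 * pp z0 + t^2 * pp w + t*(1-t) * bil z0 w \<le> (1-t) * pp z0 + t * H"
      by (simp add: pp_comb)
    then have "t * (bil z0 w - pp z0 + t * (pp z0 + pp w - bil z0 w)) \<le> t * H"
      by (simp add: algebra_simps power2_eq_square)
    then show ?thesis using t by simp
  qed
  then have "bil z0 w - pp z0 \<le> H" by (rule small_t)
  then show ?thesis using real by (simp add: z0_def)
qed

lemma conjT_le_pp_T:
  assumes hH: "h \<in> fitz_family T" and xT: "xs \<in> T x"
  shows "conjT h (x, xs) \<le> ereal (pp (x, xs))"
proof (rule conjT_leI)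
  fix w
  have "ereal (bil (x,xs) w - pp (x,xs)) \<le> h w" by (rule phi_le[OF hH xT])
  then show "ereal (bil w (x, xs)) - h w \<le> ereal (pp (x, xs))"
    by (cases "h w") (auto simp: bil_sym)
qed


lemma conjT_ge_pp:
  assumes mm: "maximal_monotone T"
    and fT: "\<And>x xs. xs \<in> T x \<Longrightarrow> f (x,xs) \<le> ereal (pp (x,xs))"
  shows "ereal (pp z) \<le> conjT f z"
proof (rule ccontr)
  assume neg: "\<not> ereal (pp z) \<le> conjT f z"
  obtain x xs where z: "z = (x, xs)" by (cases z)
  have pos: "pair (x - y) (xs - ys) > 0" if yT: "ys \<in> T y" for y ys
  proof -
    have "ereal (bil (y,ys) z) - f (y,ys) \<le> conjT f z" by (rule FY)
    also have "\<dots> < ereal (pp z)" using neg by simp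
    finally have "ereal (bil (y,ys) z) - f (y,ys) < ereal (pp z)" .
    then have "bil (y,ys) z - pp (y,ys) < pp z" using fT[OF yT]
      by (cases "f (y,ys)") auto
    then show ?thesis by (simp add: pp_pair_diff z bil_sym)
  qed
  define S where "S = (\<lambda>y. if y = x then insert xs (T y) else T y)"
  have Tmon: "monotone_op T" using mm by (simp add: maximal_monotone_def)
  have sym: "pair (a - b) (as - bs) = pair (b - a) (bs - as)" for a b :: 'a and as bs
    by (simp add: pair_simps algebra_simps)
  have "monotone_op S"
    unfolding monotone_op_def
  proof (intro allI impI)
    fix a b as bs assume A: "as \<in> S a" and B: "bs \<in> S b"
    show "0 \<le> pair (a - b) (as - bs)"
    proof (cases "as \<in> T a")
      case aT: True
      show ?thesis
      proof (cases "bs \<in> T b")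
        case True then show ?thesis using aT Tmon unfolding monotone_op_def by blast
      next
        case False
        then have "b = x" "bs = xs" using B by (auto simp: S_def split: if_splits)
        then show ?thesis using pos[OF aT] sym[of a b as bs] by simp
      qed
    next
      case aT: False
      then have ax: "a = x" "as = xs" using A by (auto simp: S_def split: if_splits)
      show ?thesis
      proof (cases "bs \<in> T b")
        case True then show ?thesis using pos[OF True] ax by simp
      next
        case False
        then have "b = x" "bs = xs" using B by (auto simp: S_def split: if_splits)
        then show ?thesis using ax by (simp add: pair_simps)
      qed
    qed
  qed
  moreover have "\<forall>y. T y \<subseteq> S y" by (auto simp: S_def)
  ultimately have "S = T" using mm unfolding maximal_monotone_def by blast
  then have xT: "xs \<in> T x" by (metis S_def insertI1)
  have "ereal (bil z z) - f z \<le> conjT f z" by (rule FY)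
  then have "ereal (pp z) \<le> conjT f z" using fT[OF xT]
    apply (cases "f z") apply (auto simp: z bil_self) apply (erule order_trans[rotated]) apply simp done
  with neg show False by simp
qed

lemma conjT_convex:
  assumes ninf: "\<And>z. f z \<noteq> -\<infinity>"
  shows "ext_convex (conjT f)"
  unfolding ext_convex_def
proof (intro allI impI)
  fix u v :: "'a \<times> ('a \<Rightarrow>\<^sub>L real)" and t :: real
  assume t: "0 \<le> t \<and> t \<le> 1"
  show "conjT f ((1 - t) *\<^sub>R u + t *\<^sub>R v) \<le> ereal (1 - t) * conjT f u + ereal t * conjT f v"
  proof (rule conjT_leI)
    fix w
    show "ereal (bil w ((1 - t) *\<^sub>R u + t *\<^sub>R v)) - f w \<le> ereal (1 - t) * conjT f u + ereal t * conjT f v"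
    proof (cases "f w")
      case (real F)
      have "ereal (bil w ((1 - t) *\<^sub>R u + t *\<^sub>R v)) - f w
          = ereal (1 - t) * ereal (bil w u - F) + ereal t * ereal (bil w v - F)"
        using real by (simp only: bil_comb) (simp add: algebra_simps)
      also have "\<dots> \<le> ereal (1 - t) * conjT f u + ereal t * conjT f v"
        using t FY[of w u f] FY[of w v f] real
        by (intro add_mono ereal_mult_left_mono) auto
      finally show ?thesis .
    qed (use ninf[of w] in auto)
  qed
qed

lemma bil_cont: "continuous_on UNIV (\<lambda>z. bil w z - F)"
  unfolding bil_def pair_def by (intro continuous_intros)

lemma conjT_lsc: "ext_lsc (conjT f)"
proof (rule lsc_realI)
  fix r
  have eq: "{z. conjT f z \<le> ereal r} = (\<Inter>w. {z. ereal (bil w z) - f w \<le> ereal r})"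
    unfolding conjT_eq by (auto simp: SUP_le_iff)
  have "closed {z. ereal (bil w z) - f w \<le> ereal r}" for w
  proof (cases "f w")
    case (real F)
    have "{z. ereal (bil w z) - f w \<le> ereal r} = {z. bil w z - F \<le> r}" using real by auto
    also have "closed \<dots>" by (rule closed_Collect_le[OF bil_cont continuous_on_const])
    finally show ?thesis .
  qed auto
  then show "closed {z. conjT f z \<le> ereal r}" unfolding eq by auto
qed


lemma avg_le_iff:
  assumes "A \<noteq> -\<infinity>" "B \<noteq> -\<infinity>"
  shows "(A + B)/2 \<le> ereal r \<longleftrightarrow> A + B \<le> ereal (2*r)"
  using assms by (cases A; cases B) auto

lemma split_lt:
  assumes "ereal s < A + B" "A \<noteq> -\<infinity>" "B \<noteq> -\<infinity>"
  shows "\<exists>a1 a2. ereal a1 < A \<and> ereal a2 < B \<and> a1 + a2 = s"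
proof (cases A)
  case (real a)
  show ?thesis
  proof (cases B)
    case (real b)
    with \<open>A = ereal a\<close> assms have d: "a + b - s > 0" by simp
    show ?thesis
      apply (rule exI[of _ "a - (a+b-s)/2"], rule exI[of _ "s - (a - (a+b-s)/2)"]) using d \<open>A = ereal a\<close> real by (auto simp: field_simps)
  next
    case PInf
    show ?thesis
      apply (rule exI[of _ "a - 1"], rule exI[of _ "s - (a - 1)"]) using \<open>A = ereal a\<close> PInf by auto
  qed (use assms in auto)
next
  case PInf
  show ?thesis
  proof (cases B)
    case (real b)
    show ?thesis
      apply (rule exI[of _ "s - (b - 1)"], rule exI[of _ "b - 1"]) using PInf real by auto
  next
    case PInf
    show ?thesis
      apply (rule exI[of _ "0"], rule exI[of _ "s"]) using \<open>A = \<infinity>\<close> PInf by auto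
  qed (use assms in auto)
qed (use assms in auto)

lemma Lenl_additive:
  assumes ninf: "\<And>z. f z \<noteq> -\<infinity>" and le: "\<And>z. conjT f z \<le> f z"
  shows "additive_enl (Lenl f)"
  unfolding additive_enl_def
proof (intro allI impI)
  fix e1 e2 :: real and x y :: 'a and xs ys
  assume "0 \<le> e1" "0 \<le> e2" and A: "xs \<in> Lenl f e1 x" and B: "ys \<in> Lenl f e2 y"
  have A': "f (x,xs) \<le> ereal (pp (x,xs) + e1)" using A by (simp add: Lenl_def pp_def)
  have B': "f (y,ys) \<le> ereal (pp (y,ys) + e2)" using B by (simp add: Lenl_def pp_def)
  have "ereal (bil (x,xs) (y,ys)) - f (x,xs) \<le> conjT f (y,ys)" by (rule FY)
  also have "\<dots> \<le> f (y,ys)" by (rule le)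
  also have "\<dots> \<le> ereal (pp (y,ys) + e2)" by (rule B')
  finally have "bil (x,xs) (y,ys) \<le> pp (x,xs) + e1 + pp (y,ys) + e2"
    using A' ninf[of "(x,xs)"] by (cases "f (x,xs)") auto
  then show "- (e1 + e2) \<le> pair (x - y) (xs - ys)" by (simp add: pp_pair_diff)
qed

lemma Lenl_det_le:
  assumes pf: "\<And>z. ereal (pp z) \<le> f z" and pg: "\<And>z. ereal (pp z) \<le> g z"
    and eq: "\<And>\<epsilon> x. \<epsilon> \<ge> 0 \<Longrightarrow> Lenl f \<epsilon> x = Lenl g \<epsilon> x"
  shows "f z \<le> g z"
proof (cases "g z")
  case (real G)
  obtain x xs where z: "z = (x,xs)" by (cases z)
  have e: "G - pp z \<ge> 0" using pg[of z] real by simp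
  have "xs \<in> Lenl g (G - pp z) x" using real by (simp add: Lenl_def z pp_def)
  then have "xs \<in> Lenl f (G - pp z) x" using eq[OF e] by simp
  then show ?thesis using real by (simp add: Lenl_def z pp_def)
qed (use pg[of z] in auto)

lemma Lenl_det:
  assumes pf: "\<And>z. ereal (pp z) \<le> f z" and pg: "\<And>z. ereal (pp z) \<le> g z"
    and eq: "\<And>\<epsilon> x. \<epsilon> \<ge> 0 \<Longrightarrow> Lenl f \<epsilon> x = Lenl g \<epsilon> x"
  shows "f = g"
proof
  fix z show "f z = g z"
    using Lenl_det_le[of f g z, OF pf pg eq] Lenl_det_le[of g f z, OF pg pf eq[symmetric]]
    by (simp add: antisym)
qed

lemma fitzI:
  assumes "\<And>z. ereal (pp z) \<le> f z" "ext_convex f" "ext_lsc f"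
    "\<And>x xs. xs \<in> T x \<Longrightarrow> f (x, xs) \<le> ereal (pp (x, xs))"
  shows "f \<in> fitz_family T"
  unfolding fitz_family_def
proof (safe)
  fix z assume "f z = -\<infinity>" then show False using assms(1)[of z] by simp
next
  fix x xs show "ereal (pair x xs) \<le> f (x, xs)" using assms(1)[of "(x,xs)"] by (simp add: pp_def)
next
  fix x xs assume "xs \<in> T x" then show "f (x, xs) = ereal (pair x xs)"
    using assms(1)[of "(x,xs)"] assms(4)[of xs x] by (simp add: pp_def antisym)
qed (use assms in auto)


context
  fixes T :: "'a::real_normed_vector \<Rightarrow> ('a \<Rightarrow>\<^sub>L real) set" and h
  assumes mm: "maximal_monotone T" and hH: "h \<in> fitz_family T"
begin

lemma hT_ge: "ereal (pp z) \<le> conjT h z"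
  by (rule conjT_ge_pp[OF mm]) (simp add: fitzD(5)[OF hH])

lemma hT_ninf: "conjT h z \<noteq> -\<infinity>"
  using hT_ge[of z] by auto

lemma avg_le_iff': "avg_op h z \<le> ereal r \<longleftrightarrow> h z + conjT h z \<le> ereal (2*r)"
  unfolding avg_eq by (rule avg_le_iff[OF fitzD(1)[OF hH] hT_ninf])

lemma avg_in: "avg_op h \<in> fitz_family T"
proof (rule fitzI)
  fix z
  show "ereal (pp z) \<le> avg_op h z"
    using hT_ge[of z] fitzD(4)[OF hH, of z] unfolding avg_eq
    by (cases "h z"; cases "conjT h z") auto
next
  fix x xs assume xT: "xs \<in> T x"
  then show "avg_op h (x, xs) \<le> ereal (pp (x, xs))"
    using conjT_le_pp_T[OF hH xT] fitzD(5)[OF hH xT] hT_ninf[of "(x,xs)"] unfolding avg_eq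
    by (cases "conjT h (x,xs)") auto
next
  show "ext_convex (avg_op h)"
  proof (rule convex_realI)
    fix z show "avg_op h z \<noteq> -\<infinity>" using hT_ninf[of z] fitzD(1)[OF hH, of z] unfolding avg_eq
      by (cases "h z"; cases "conjT h z") auto
  next
    fix u v and t a b :: real
    assume t: "0 \<le> t" "t \<le> 1" and A: "avg_op h u \<le> ereal a" and B: "avg_op h v \<le> ereal b"
    obtain a1 a2 where a12: "h u = ereal a1" "conjT h u = ereal a2"
      using A hT_ninf[of u] fitzD(1)[OF hH, of u] unfolding avg_eq
      by (cases "h u"; cases "conjT h u") auto
    obtain b1 b2 where b12: "h v = ereal b1" "conjT h v = ereal b2"
      using B hT_ninf[of v] fitzD(1)[OF hH, of v] unfolding avg_eq
      by (cases "h v"; cases "conjT h v") auto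
    have aa: "a1 + a2 \<le> 2 * a" using A a12 unfolding avg_eq by simp
    have bb: "b1 + b2 \<le> 2 * b" using B b12 unfolding avg_eq by simp
    have h1: "h ((1-t) *\<^sub>R u + t *\<^sub>R v) \<le> ereal ((1-t)*a1 + t*b1)"
      by (rule convex_realD[OF fitzD(2)[OF hH] t]) (use a12 b12 in auto)
    have h2: "conjT h ((1-t) *\<^sub>R u + t *\<^sub>R v) \<le> ereal ((1-t)*a2 + t*b2)"
      by (rule convex_realD[OF conjT_convex[OF fitzD(1)[OF hH]] t]) (use a12 b12 in auto)
    have "(1-t)*(a1+a2) + t*(b1+b2) \<le> (1-t)*(2*a) + t*(2*b)"
      using t aa bb by (intro add_mono mult_left_mono) auto
    then have "ereal ((1-t)*a1 + t*b1) + ereal ((1-t)*a2 + t*b2) \<le> ereal (2 * ((1-t)*a + t*b))"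
      by (simp add: algebra_simps)
    then show "avg_op h ((1-t) *\<^sub>R u + t *\<^sub>R v) \<le> ereal ((1-t)*a + t*b)"
      unfolding avg_eq
      using avg_le_iff[OF fitzD(1)[OF hH] hT_ninf] add_mono[OF h1 h2] by (meson order_trans)
  qed
next
  show "ext_lsc (avg_op h)"
  proof (rule lsc_realI)
    fix r
    have "open {z. ereal r < avg_op h z}"
    proof (subst open_subopen, intro ballI)
      fix z assume "z \<in> {z. ereal r < avg_op h z}"
      then have "ereal (2*r) < h z + conjT h z"
        using avg_le_iff'[of z r] by (simp add: not_le[symmetric])
      then obtain a1 a2 where a: "ereal a1 < h z" "ereal a2 < conjT h z" "a1 + a2 = 2*r"
        using split_lt fitzD(1)[OF hH] hT_ninf by blast
      let ?U = "{w. ereal a1 < h w} \<inter> {w. ereal a2 < conjT h w}"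
      have "open ?U" by (intro open_Int lsc_open fitzD(3)[OF hH] conjT_lsc)
      moreover have "z \<in> ?U" using a by auto
      moreover have "?U \<subseteq> {z. ereal r < avg_op h z}"
      proof
        fix w assume "w \<in> ?U"
        then have "ereal a1 + ereal a2 < h w + conjT h w" using ereal_add_strict_mono2 by blast
        then have "ereal (2*r) < h w + conjT h w" using a by simp
        then show "w \<in> {z. ereal r < avg_op h z}"
          using avg_le_iff'[of w r] by (simp add: not_le[symmetric])
      qed
      ultimately show "\<exists>U. open U \<and> z \<in> U \<and> U \<subseteq> {z. ereal r < avg_op h z}" by blast
    qed
    then have "closed (- {z. ereal r < avg_op h z})" by (simp add: closed_Compl)
    moreover have "- {z. ereal r < avg_op h z} = {z. avg_op h z \<le> ereal r}" by auto
    ultimately show "closed {z. avg_op h z \<le> ereal r}" by simp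
  qed
qed

lemma avg_conj_le: "conjT (avg_op h) z \<le> avg_op h z"
proof (rule conjT_leI)
  fix w
  have f1: "ereal (bil w z) - h w \<le> conjT h z" by (rule FY)
  have f2: "ereal (bil z w) - h z \<le> conjT h w" by (rule FY)
  show "ereal (bil w z) - avg_op h w \<le> avg_op h z"
  proof (cases "h w = \<infinity> \<or> conjT h w = \<infinity> \<or> h z = \<infinity> \<or> conjT h z = \<infinity>")
    case True
    then show ?thesis using hT_ninf[of w] hT_ninf[of z] fitzD(1)[OF hH, of w] fitzD(1)[OF hH, of z]
      unfolding avg_eq by (cases "h w"; cases "conjT h w"; cases "h z"; cases "conjT h z") auto
  next
    case False
    then obtain a b c d where e: "h w = ereal a" "conjT h w = ereal b" "h z = ereal c" "conjT h z = ereal d"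
      using hT_ninf[of w] hT_ninf[of z] fitzD(1)[OF hH, of w] fitzD(1)[OF hH, of z]
      by (cases "h w"; cases "conjT h w"; cases "h z"; cases "conjT h z") auto
    then show ?thesis using f1 f2 unfolding avg_eq by (simp add: bil_sym field_simps)
  qed
qed

lemma breve_eq: "breve h \<epsilon> x = Lenl (avg_op h) \<epsilon> x"
proof (intro set_eqI)
  fix xs :: "'a \<Rightarrow>\<^sub>L real"
  define z where "z = (x, xs)"
  have key: "pair (a - x) xs + pair x (b - xs) = bil (a,b) (x,xs) - 2 * pp (x,xs)" for a b
    by (simp add: bil_def pp_def pair_simps)
  show "xs \<in> breve h \<epsilon> x \<longleftrightarrow> xs \<in> Lenl (avg_op h) \<epsilon> x"
  proof (cases "h z")
    case (real H)
    have "xs \<in> breve h \<epsilon> x \<longleftrightarrow> (\<forall>w. ereal H + ereal (bil w z - 2 * pp z) - ereal (2*\<epsilon>) \<le> h w)"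
      using real unfolding z_def by (simp add: breve_def eps_subdiff_def key)
    also have "\<dots> \<longleftrightarrow> (\<forall>w. ereal (bil w z) - h w \<le> ereal (2 * pp z + 2 * \<epsilon> - H))"
    proof -
      have "ereal H + ereal (bil w z - 2 * pp z) - ereal (2*\<epsilon>) \<le> h w
          \<longleftrightarrow> ereal (bil w z) - h w \<le> ereal (2 * pp z + 2 * \<epsilon> - H)" for w
        using fitzD(1)[OF hH, of w] by (cases "h w") (auto simp: algebra_simps)
      then show ?thesis by simp
    qed
    also have "\<dots> \<longleftrightarrow> conjT h z \<le> ereal (2 * pp z + 2 * \<epsilon> - H)"
      unfolding conjT_eq by (simp add: SUP_le_iff)
    also have "\<dots> \<longleftrightarrow> avg_op h z \<le> ereal (pp z + \<epsilon>)"
      unfolding avg_eq using real hT_ninf[of z] by (cases "conjT h z") (auto simp: algebra_simps)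
    also have "\<dots> \<longleftrightarrow> xs \<in> Lenl (avg_op h) \<epsilon> x"
      by (simp add: Lenl_def z_def pp_def)
    finally show ?thesis .
  next
    case PInf
    then have "avg_op h z = \<infinity>" unfolding avg_eq using hT_ninf[of z] by simp
    then show ?thesis using PInf by (simp add: breve_def eps_subdiff_def Lenl_def z_def[symmetric])
  next
    case MInf then show ?thesis using fitzD(1)[OF hH, of z] by simp
  qed
qed

end


lemma ge_ninf: "f z \<noteq> -\<infinity>" if "\<And>z. ereal (p z) \<le> f z"
  using that[of z] by auto

theorem corollary3p5:
  fixes T :: "'a::banach \<Rightarrow> ('a \<Rightarrow>\<^sub>L real) set"
    and h :: "'a \<times> ('a \<Rightarrow>\<^sub>L real) \<Rightarrow> ereal"
  assumes "reflexive_space TYPE('a)"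
    and "maximal_monotone T"
    and "h \<in> fitz_family T"
  shows "additive_enl (breve h)
    \<and> (max_additive T (breve h) \<longleftrightarrow> fenchel_conj (avg_op h) \<circ> iswap = avg_op h)
    \<and> (fenchel_conj h \<circ> iswap = h \<longrightarrow> max_additive T (breve h))"
proof -
  note mm = assms(2) and hH = assms(3)
  define g where "g = avg_op h"
  have gH: "g \<in> fitz_family T" unfolding g_def by (rule avg_in[OF mm hH])
  have gle: "\<And>z. conjT g z \<le> g z" unfolding g_def by (rule avg_conj_le[OF mm hH])
  have bre: "breve h = Lenl g"
    by (intro ext) (simp add: g_def breve_eq[OF mm hH])
  have add: "additive_enl (breve h)"
    unfolding bre by (rule Lenl_additive[OF fitzD(1)[OF gH] gle])
  have enl: "is_enlargement T (breve h)"
    unfolding is_enlargement_def bre using gH by blast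
  have gpp: "\<And>z. ereal (pp z) \<le> g z" by (rule fitzD(4)[OF gH])
  have gT_ge: "\<And>z. ereal (pp z) \<le> conjT g z"
    by (rule conjT_ge_pp[OF mm]) (simp add: fitzD(5)[OF gH])
  have suff: "max_additive T (breve h)" if gfix: "conjT g = g"
    unfolding max_additive_def
  proof (rule conjI[OF enl], rule conjI[OF add], rule allI, rule impI)
    fix E' :: "real \<Rightarrow> 'a \<Rightarrow> ('a \<Rightarrow>\<^sub>L real) set"
    assume A: "is_enlargement T E' \<and> additive_enl E' \<and> (\<forall>\<epsilon>\<ge>0. \<forall>x. breve h \<epsilon> x \<subseteq> E' \<epsilon> x)"
    then obtain g' where g'H: "g' \<in> fitz_family T" and E'eq: "\<forall>\<epsilon>\<ge>0. \<forall>x. E' \<epsilon> x = Lenl g' \<epsilon> x"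
      unfolding is_enlargement_def by blast
    have addE: "additive_enl E'" and sub: "\<forall>\<epsilon>\<ge>0. \<forall>x. breve h \<epsilon> x \<subseteq> E' \<epsilon> x" using A by auto
    show "\<forall>\<epsilon>\<ge>0. \<forall>x. breve h \<epsilon> x = E' \<epsilon> x"
    proof (intro allI impI)
      fix \<epsilon> :: real and x :: 'a assume e: "\<epsilon> \<ge> 0"
      show "breve h \<epsilon> x = E' \<epsilon> x"
      proof
        show "breve h \<epsilon> x \<subseteq> E' \<epsilon> x" using sub e by auto
      next
        show "E' \<epsilon> x \<subseteq> breve h \<epsilon> x"
        proof
          fix xs assume xs: "xs \<in> E' \<epsilon> x"
          have "conjT g (x, xs) \<le> ereal (pp (x,xs) + \<epsilon>)"
          proof (rule conjT_leI)
            fix w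
            show "ereal (bil w (x, xs)) - g w \<le> ereal (pp (x, xs) + \<epsilon>)"
            proof (cases "g w")
              case (real G)
              obtain y ys where w: "w = (y, ys)" by (cases w)
              have e2: "G - pp w \<ge> 0" using gpp[of w] real by simp
              have "ys \<in> breve h (G - pp w) y" using real by (simp add: bre Lenl_def w pp_def)
              then have "ys \<in> E' (G - pp w) y" using sub e2 by blast
              then have "pair (y - x) (ys - xs) \<ge> - ((G - pp w) + \<epsilon>)"
                using addE e2 e xs unfolding additive_enl_def by blast
              then show ?thesis using real by (simp add: pp_pair_diff w)
            qed (use fitzD(1)[OF gH, of w] in auto)
          qed
          then show "xs \<in> breve h \<epsilon> x" using gfix by (simp add: bre Lenl_def pp_def)
        qed
      qed
    qed
  qed
  have nec: "conjT g = g" if max: "max_additive T (breve h)"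
  proof (rule ext, rule antisym[OF gle], rule ccontr)
    fix z0 assume "\<not> g z0 \<le> conjT g z0"
    then have lt: "conjT g z0 < g z0" by simp
    obtain c where c: "conjT g z0 = ereal c" using lt gT_ge[of z0] by (cases "conjT g z0") auto
    have cpp: "pp z0 \<le> c" using gT_ge[of z0] c by simp
    define f where "f = (\<lambda>z. if z = z0 then ereal c else g z)"
    have fg: "\<And>z. f z \<le> g z" using lt c by (auto simp: f_def)
    have fpp: "\<And>z. ereal (pp z) \<le> f z" using gpp cpp by (auto simp: f_def)
    have fninf: "\<And>z. f z \<noteq> -\<infinity>" by (rule ge_ninf[OF fpp])
    have fT: "conjT f z \<le> f z" for z
    proof (rule conjT_leI)
      fix w
      show "ereal (bil w z) - f w \<le> f z"
      proof (cases "z = z0")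
        case True
        show ?thesis
        proof (cases "w = z0")
          case True
          then show ?thesis using \<open>z = z0\<close> cpp by (simp add: f_def bil_self)
        next
          case False
          have "ereal (bil w z0) - g w \<le> conjT g z0" by (rule FY)
          then show ?thesis using False True c by (simp add: f_def)
        qed
      next
        case zF: False
        show ?thesis
        proof (cases "w = z0")
          case True
          have "ereal (bil z w) - g z \<le> conjT g w" by (rule FY)
          then have "ereal (bil w z) - conjT g w \<le> g z" by (simp add: bil_sym ereal_swap)
          then show ?thesis using True zF c by (simp add: f_def)
        next
          case False
          have "ereal (bil w z) - g w \<le> conjT g z" by (rule FY)
          also have "\<dots> \<le> g z" by (rule gle)
          finally show ?thesis using False zF by (simp add: f_def)
        qed
      qed
    qed
    define f' where "f' = conjT (conjT f)"
    have fTge: "\<And>z. ereal (pp z) \<le> conjT f z"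
      by (rule order_trans[OF gT_ge conjT_mono[OF fg]])
    have f'ge: "\<And>z. conjT f z \<le> f' z" unfolding f'_def by (rule conjT_mono[OF fT])
    have f'pp: "\<And>z. ereal (pp z) \<le> f' z" by (rule order_trans[OF fTge f'ge])
    have f'le: "\<And>z. f' z \<le> f z" unfolding f'_def by (rule biconj_le)
    have f'g: "\<And>z. f' z \<le> g z" by (rule order_trans[OF f'le fg])
    have f'T: "\<And>z. conjT f' z \<le> f' z"
      unfolding f'_def by (rule order_trans[OF biconj_le f'ge[unfolded f'_def]])
    have f'ninf: "\<And>z. f' z \<noteq> -\<infinity>" by (rule ge_ninf[OF f'pp])
    have fTninf: "\<And>z. conjT f z \<noteq> -\<infinity>" by (rule ge_ninf[OF fTge])
    have f'H: "f' \<in> fitz_family T"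
    proof (rule fitzI[OF f'pp])
      show "ext_convex f'" unfolding f'_def by (rule conjT_convex[OF fTninf])
      show "ext_lsc f'" unfolding f'_def by (rule conjT_lsc)
      fix x xs assume "xs \<in> T x"
      then show "f' (x, xs) \<le> ereal (pp (x, xs))" using f'g[of "(x,xs)"] fitzD(5)[OF gH] by simp
    qed
    have "is_enlargement T (Lenl f')" unfolding is_enlargement_def using f'H by blast
    moreover have "additive_enl (Lenl f')" by (rule Lenl_additive[OF f'ninf f'T])
    moreover have "\<forall>\<epsilon>\<ge>0. \<forall>x. breve h \<epsilon> x \<subseteq> Lenl f' \<epsilon> x"
    proof (intro allI impI subsetI)
      fix \<epsilon> x xs assume "xs \<in> breve h \<epsilon> x"
      then show "xs \<in> Lenl f' \<epsilon> x"
        using order_trans[OF f'g[of "(x,xs)"]] unfolding bre Lenl_def by simp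
    qed
    ultimately have "\<forall>\<epsilon>\<ge>0. \<forall>x. breve h \<epsilon> x = Lenl f' \<epsilon> x"
      using max unfolding max_additive_def by blast
    then have "g = f'" by (intro Lenl_det[OF gpp f'pp]) (simp add: bre)
    then have "g z0 \<le> ereal c" using f'le[of z0] by (simp add: f_def)
    with lt c show False by simp
  qed
  have part2: "max_additive T (breve h) \<longleftrightarrow> fenchel_conj (avg_op h) \<circ> iswap = avg_op h"
    using suff nec by (auto simp: conjT_def g_def)
  have part3: "max_additive T (breve h)" if hfix: "fenchel_conj h \<circ> iswap = h"
  proof -
    have hc: "conjT h = h" using hfix by (simp add: conjT_def)
    have "g = h"
    proof
      fix z show "g z = h z" unfolding g_def avg_eq hc using fitzD(1)[OF hH, of z]
        by (cases "h z") auto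
    qed
    then have "conjT g = g" using hc by simp
    then show ?thesis by (rule suff)
  qed
  show ?thesis using add part2 part3 by blast
qed

end
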